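(* Let $\boldsymbol{\Omega}_M=\boldsymbol{\Omega}^{(0)}\boldsymbol{\Omega}^{(0)\top}+\sum_{q=1}^Q\boldsymbol{\Omega}^{(q)}\boldsymbol{\Omega}^{(q)\top}$ and $\bar{\mathbf S}$ be as in the context. Then the $i$-th leading eigenvalue of $\boldsymbol{\Omega}_M$ satisfies $$\lambda_i(\boldsymbol{\Omega}_M)=\begin{cases}\|\boldsymbol\theta\|^2\|\boldsymbol\delta\|^2\,\lambda_i(\bar{\mathbf S}), & 1\le i\le K,\\ 0, & i>K.\end{cases}$$ Moreover, let $\bar{\mathbf S}=\mathbf J\boldsymbol\Sigma\mathbf J^\top$ be an eigenvalue decomposition of $\bar{\mathbf S}$ with $\mathbf J\in\mathbb R^{K\times K}$ orthogonal and $\boldsymbol\Sigma$ diagonal with entries in decreasing order. Then $\boldsymbol{\Omega}_M$ has the compact eigenvalue decomposition $\boldsymbol{\Omega}_M=\mathbf U\boldsymbol\Lambda\mathbf U^\top$ with $\boldsymbol\Lambda=\|\boldsymbol\theta\|^2\|\boldsymbol\delta\|^2\boldsymbol\Sigma$ and $\mathbf U\in\mathbb R^{n\times K}$ having orthonormal columns, whose $i$-th row is $$\mathbf U_{\bar i}=\frac{\theta_i}{\|\boldsymbol\theta^{(l_i)}\|}\,\mathbf J_{\bar{l_i}},\qquad 1\le i\le n,$$ where $\mathbf J_{\bar k}$ denotes the $k$-th row of $\mathbf J$. Finally, if $\|\boldsymbol\theta^{(k)}\|\asymp\|\boldsymbol\theta^{(k')}\|$ for all $k,k'\in\{1,\dots,K\}$,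 then $\|\mathbf U_{\bar i}\|\asymp\theta_i/\|\boldsymbol\theta\|$ uniformly in $i$.
   Context: Fix integers $K\ge2$, $K'\ge1$, $Q\ge1$. Primary nodes are $\{1,\dots,n\}$ with community labels $l_i\in\{1,\dots,K\}$, every community nonempty; bipartite nodes are $\{1,\dots,m\}$ with labels $r_j\in\{1,\dots,K'\}$ (the same labels for all $q$), every bipartite community nonempty. Parameters: $\boldsymbol\theta=(\theta_1,\dots,\theta_n)^\top\in(0,1]^n$, $\boldsymbol\delta=(\delta_1,\dots,\delta_m)^\top\in(0,1]^m$, a symmetric $\mathbf E\in[0,1]^{K\times K}$, and $\mathbf F^{(q)}\in[0,1]^{K\times K'}$ for $q=1,\dots,Q$. Define $\boldsymbol\Omega^{(0)}\in\mathbb R^{n\times n}$ by $\boldsymbol\Omega^{(0)}(i,j)=\theta_i\theta_j\mathbf E(l_i,l_j)$ and $\boldsymbol\Omega^{(q)}\in\mathbb R^{n\times m}$ by $\boldsymbol\Omega^{(q)}(i,j)=\theta_i\delta_j\mathbf F^{(q)}(l_i,r_j)$. Let $\boldsymbol\theta^{(k)}\in\mathbb R^n$ with $\theta^{(k)}_i=\theta_i\mathbb I(l_i=k)$, $\boldsymbol\delta^{(k')}\in\mathbb R^m$ with $\delta^{(k')}_j=\delta_j\mathbb I(r_j=k')$; $\boldsymbol\Psi_\theta=\mathrm{diag}(\|\boldsymbol\theta^{(k)}\|/\|\boldsymbol\theta\|)_{k=1}^K$, $\boldsymbol\Psi_\delta=\mathrm{diag}(\|\boldsymbol\delta^{(k')}\|/\|\boldsymbol\delta\|)_{k'=1}^{K'}$;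 $\mathbf S^{(0)}=\boldsymbol\Psi_\theta\mathbf E\boldsymbol\Psi_\theta$, $\mathbf S^{(q)}=\boldsymbol\Psi_\theta\mathbf F^{(q)}\boldsymbol\Psi_\delta$, and $\bar{\mathbf S}=(\|\boldsymbol\theta\|^2/\|\boldsymbol\delta\|^2)\mathbf S^{(0)}\mathbf S^{(0)\top}+\sum_{q=1}^Q\mathbf S^{(q)}\mathbf S^{(q)\top}$. Norms $\|\cdot\|$ are Euclidean. Eigenvalues of the positive semidefinite matrices $\boldsymbol\Omega_M$, $\bar{\mathbf S}$ are ordered decreasingly. For the last assertion, all quantities other than $K,K',Q$ may depend on $n$, and $a_n\asymp b_n$ means $b_n/C\le a_n\le Cb_n$ for a constant $C$ independent of $n$ and all large $n$. *)

theory Defs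
  imports "Jordan_Normal_Form.Matrix" "Jordan_Normal_Form.Char_Poly"
          "HOL-Computational_Algebra.Polynomial" "HOL-Library.Multiset"
begin

text \<open>Conventions: all indices are 0-based. Primary nodes are 0..n-1, bipartite nodes
  0..m-1, primary communities 0..K-1, bipartite communities 0..K'-1; the layers
  q range over 1..Q as in the paper. Vectors are functions nat to real restricted
  to an explicit length.\<close>

definition vnorm :: "nat \<Rightarrow> (nat \<Rightarrow> real) \<Rightarrow> real" where
  "vnorm d x = sqrt (\<Sum>i<d. (x i)\<^sup>2)"

definition restr :: "(nat \<Rightarrow> nat) \<Rightarrow> (nat \<Rightarrow> real) \<Rightarrow> nat \<Rightarrow> nat \<Rightarrow> real" where
  "restr lab x k = (\<lambda>i. if lab i = k then x i else 0)"

definition mat_sum :: "nat \<Rightarrow> nat \<Rightarrow> (nat \<Rightarrow> real mat) \<Rightarrow> nat set \<Rightarrow> real mat" where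
  "mat_sum d1 d2 A I = mat d1 d2 (\<lambda>(i,j). \<Sum>q\<in>I. A q $$ (i,j))"

definition model_ok ::
  "nat \<Rightarrow> nat \<Rightarrow> nat \<Rightarrow> nat \<Rightarrow> nat \<Rightarrow> (nat \<Rightarrow> nat) \<Rightarrow> (nat \<Rightarrow> nat)
   \<Rightarrow> (nat \<Rightarrow> real) \<Rightarrow> (nat \<Rightarrow> real) \<Rightarrow> real mat \<Rightarrow> (nat \<Rightarrow> real mat) \<Rightarrow> bool" where
  "model_ok K K' Q n m l r \<theta> \<delta> E F \<longleftrightarrow>
     (\<forall>i<n. l i < K) \<and> (\<forall>k<K. \<exists>i<n. l i = k) \<and>
     (\<forall>j<m. r j < K') \<and> (\<forall>k<K'. \<exists>j<m. r j = k) \<and>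
     (\<forall>i<n. 0 < \<theta> i \<and> \<theta> i \<le> 1) \<and> (\<forall>j<m. 0 < \<delta> j \<and> \<delta> j \<le> 1) \<and>
     E \<in> carrier_mat K K \<and> transpose_mat E = E \<and>
     (\<forall>a<K. \<forall>b<K. 0 \<le> E $$ (a,b) \<and> E $$ (a,b) \<le> 1) \<and>
     (\<forall>q\<in>{1..Q}. F q \<in> carrier_mat K K' \<and>
        (\<forall>a<K. \<forall>b<K'. 0 \<le> F q $$ (a,b) \<and> F q $$ (a,b) \<le> 1))"

definition Omega0 :: "nat \<Rightarrow> (nat \<Rightarrow> nat) \<Rightarrow> (nat \<Rightarrow> real) \<Rightarrow> real mat \<Rightarrow> real mat" where
  "Omega0 n l \<theta> E = mat n n (\<lambda>(i,j). \<theta> i * \<theta> j * E $$ (l i, l j))"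

definition OmegaQ :: "nat \<Rightarrow> nat \<Rightarrow> (nat \<Rightarrow> nat) \<Rightarrow> (nat \<Rightarrow> nat) \<Rightarrow> (nat \<Rightarrow> real)
   \<Rightarrow> (nat \<Rightarrow> real) \<Rightarrow> real mat \<Rightarrow> real mat" where
  "OmegaQ n m l r \<theta> \<delta> Fq = mat n m (\<lambda>(i,j). \<theta> i * \<delta> j * Fq $$ (l i, r j))"

definition Omega_M :: "nat \<Rightarrow> nat \<Rightarrow> nat \<Rightarrow> (nat \<Rightarrow> nat) \<Rightarrow> (nat \<Rightarrow> nat)
   \<Rightarrow> (nat \<Rightarrow> real) \<Rightarrow> (nat \<Rightarrow> real) \<Rightarrow> real mat \<Rightarrow> (nat \<Rightarrow> real mat) \<Rightarrow> real mat" where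
  "Omega_M Q n m l r \<theta> \<delta> E F =
     Omega0 n l \<theta> E * transpose_mat (Omega0 n l \<theta> E) +
     mat_sum n n (\<lambda>q. OmegaQ n m l r \<theta> \<delta> (F q) * transpose_mat (OmegaQ n m l r \<theta> \<delta> (F q))) {1..Q}"

definition Psi :: "nat \<Rightarrow> nat \<Rightarrow> (nat \<Rightarrow> nat) \<Rightarrow> (nat \<Rightarrow> real) \<Rightarrow> real mat" where
  "Psi K n l \<theta> = mat K K (\<lambda>(a,b). if a = b then vnorm n (restr l \<theta> a) / vnorm n \<theta> else 0)"

definition Sbar :: "nat \<Rightarrow> nat \<Rightarrow> nat \<Rightarrow> nat \<Rightarrow> nat \<Rightarrow> (nat \<Rightarrow> nat) \<Rightarrow> (nat \<Rightarrow> nat)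
   \<Rightarrow> (nat \<Rightarrow> real) \<Rightarrow> (nat \<Rightarrow> real) \<Rightarrow> real mat \<Rightarrow> (nat \<Rightarrow> real mat) \<Rightarrow> real mat" where
  "Sbar K K' Q n m l r \<theta> \<delta> E F =
     (let S0 = Psi K n l \<theta> * E * Psi K n l \<theta>;
          S = (\<lambda>q. Psi K n l \<theta> * F q * Psi K' m r \<delta>)
      in ((vnorm n \<theta>)\<^sup>2 / (vnorm m \<delta>)\<^sup>2) \<cdot>\<^sub>m (S0 * transpose_mat S0) +
         mat_sum K K (\<lambda>q. S q * transpose_mat (S q)) {1..Q})"

text \<open>Eigenvalues (with algebraic multiplicity, i.e. roots of the characteristic
  polynomial) in decreasing order; eig i A is the i-th one, for 1 \<le> i.\<close>
definition eigs_desc :: "real mat \<Rightarrow> real list" where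
  "eigs_desc A = rev (sorted_list_of_multiset (proots (char_poly A)))"

definition eig :: "nat \<Rightarrow> real mat \<Rightarrow> real" where
  "eig i A = eigs_desc A ! (i - 1)"

definition eig_decomp :: "nat \<Rightarrow> real mat \<Rightarrow> real mat \<Rightarrow> real mat \<Rightarrow> bool" where
  "eig_decomp K S J \<Sigma> \<longleftrightarrow>
     J \<in> carrier_mat K K \<and> transpose_mat J * J = 1\<^sub>m K \<and> J * transpose_mat J = 1\<^sub>m K \<and>
     \<Sigma> \<in> carrier_mat K K \<and> diagonal_mat \<Sigma> \<and>
     (\<forall>a b. a \<le> b \<and> b < K \<longrightarrow> \<Sigma> $$ (b,b) \<le> \<Sigma> $$ (a,a)) \<and>
     S = J * \<Sigma> * transpose_mat J"

definition Umat :: "nat \<Rightarrow> nat \<Rightarrow> (nat \<Rightarrow> nat) \<Rightarrow> (nat \<Rightarrow> real) \<Rightarrow> real mat \<Rightarrow> real mat" where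
  "Umat K n l \<theta> J = mat n K (\<lambda>(i,a). \<theta> i / vnorm n (restr l \<theta> (l i)) * J $$ (l i, a))"

end

theory Submission
  imports Defs
begin

lemma poly_char_det:
  fixes A :: "real mat"
  assumes A: "A \<in> carrier_mat n n"
  shows "poly (char_poly A) x = det (x \<cdot>\<^sub>m 1\<^sub>m n - A)"
proof -
  have "- (char_matrix A x) = x \<cdot>\<^sub>m 1\<^sub>m n - A"
    by (rule eq_matI, insert A, auto simp: char_matrix_def)
  thus ?thesis using char_poly_matrix[OF A] by simp
qed

lemma add_one_minus: "(C :: 'a :: ring_1 mat) \<in> carrier_mat k k \<Longrightarrow> C + (1\<^sub>m k - C) = 1\<^sub>m k"
  by (rule eq_matI, auto)

lemma sylvester_eval:
  fixes A B :: "real mat"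
  assumes A: "A \<in> carrier_mat n k" and B: "B \<in> carrier_mat k n" and x: "x \<noteq> 0"
  shows "det (x \<cdot>\<^sub>m 1\<^sub>m n - A * B) * x ^ k = x ^ n * det (x \<cdot>\<^sub>m 1\<^sub>m k - B * A)"
proof -
  define M where "M = four_block_mat (x \<cdot>\<^sub>m 1\<^sub>m n) A B (1\<^sub>m k)"
  have AB: "A * B \<in> carrier_mat n n" and BA: "B * A \<in> carrier_mat k k" using A B by auto
  have eq1: "M = four_block_mat (1\<^sub>m n) A (0\<^sub>m k n) (1\<^sub>m k) * four_block_mat (x \<cdot>\<^sub>m 1\<^sub>m n - A * B) (0\<^sub>m n k) B (1\<^sub>m k)"
    unfolding M_def
    apply (subst mult_four_block_mat[of _ n n _ k _ k _ _ n _ k _ _])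
    using A B AB by auto
  have eq2: "M = four_block_mat (x \<cdot>\<^sub>m 1\<^sub>m n) (0\<^sub>m n k) B (1\<^sub>m k) * four_block_mat (1\<^sub>m n) ((1/x) \<cdot>\<^sub>m A) (0\<^sub>m k n) (1\<^sub>m k - (1/x) \<cdot>\<^sub>m (B * A))"
  proof -
    have h1: "x \<cdot>\<^sub>m 1\<^sub>m n * ((1/x) \<cdot>\<^sub>m A) + 0\<^sub>m n k = A"
      using A x by (subst mult_smult_assoc_mat[of _ n n _ k], simp, simp, intro eq_matI, auto)
    have h2: "B * ((1/x) \<cdot>\<^sub>m A) + (1\<^sub>m k - (1/x) \<cdot>\<^sub>m (B * A)) = 1\<^sub>m k"
    proof -
      have "B * ((1/x) \<cdot>\<^sub>m A) = (1/x) \<cdot>\<^sub>m (B * A)" using B A by (rule mult_smult_distrib)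
      thus ?thesis using add_one_minus[OF smult_carrier_mat[OF BA]] by simp
    qed
    show ?thesis
    unfolding M_def
    apply (subst mult_four_block_mat[of _ n n _ k _ k _ _ n _ k _ _])
    using A B BA x h1 h2 by auto
  qed
  have c1: "four_block_mat (1\<^sub>m n) A (0\<^sub>m k n) (1\<^sub>m k) \<in> carrier_mat (n+k) (n+k)"
    using A by auto
  have c2: "four_block_mat (x \<cdot>\<^sub>m 1\<^sub>m n - A * B) (0\<^sub>m n k) B (1\<^sub>m k) \<in> carrier_mat (n+k) (n+k)"
    by (intro four_block_carrier_mat minus_carrier_mat[OF AB] one_carrier_mat)
  have c3: "four_block_mat (x \<cdot>\<^sub>m 1\<^sub>m n) (0\<^sub>m n k) B (1\<^sub>m k) \<in> carrier_mat (n+k) (n+k)"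
    by auto
  have c4: "four_block_mat (1\<^sub>m n) ((1/x) \<cdot>\<^sub>m A) (0\<^sub>m k n) (1\<^sub>m k - (1/x) \<cdot>\<^sub>m (B * A)) \<in> carrier_mat (n+k) (n+k)"
    by (intro four_block_carrier_mat minus_carrier_mat smult_carrier_mat BA one_carrier_mat)
  have e1: "det (four_block_mat (1\<^sub>m n) A (0\<^sub>m k n) (1\<^sub>m k)) = 1"
    using det_four_block_mat_lower_left_zero[of "1\<^sub>m n" n A k "0\<^sub>m k n" "1\<^sub>m k"] A by simp
  have e2: "det (four_block_mat (x \<cdot>\<^sub>m 1\<^sub>m n - A * B) (0\<^sub>m n k) B (1\<^sub>m k)) = det (x \<cdot>\<^sub>m 1\<^sub>m n - A * B)"
    using det_four_block_mat_upper_right_zero[of "x \<cdot>\<^sub>m 1\<^sub>m n - A * B" n "0\<^sub>m n k" k B "1\<^sub>m k"] B minus_carrier_mat[OF AB] by simp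
  have e3: "det (four_block_mat (x \<cdot>\<^sub>m 1\<^sub>m n) (0\<^sub>m n k) B (1\<^sub>m k)) = x ^ n"
    using det_four_block_mat_upper_right_zero[of "x \<cdot>\<^sub>m 1\<^sub>m n" n "0\<^sub>m n k" k B "1\<^sub>m k"] B by (simp add: det_smult)
  have e4: "det (four_block_mat (1\<^sub>m n) ((1/x) \<cdot>\<^sub>m A) (0\<^sub>m k n) (1\<^sub>m k - (1/x) \<cdot>\<^sub>m (B * A))) = det (1\<^sub>m k - (1/x) \<cdot>\<^sub>m (B * A))"
    using det_four_block_mat_lower_left_zero[of "1\<^sub>m n" n "(1/x) \<cdot>\<^sub>m A" k "0\<^sub>m k n" "1\<^sub>m k - (1/x) \<cdot>\<^sub>m (B * A)"] A minus_carrier_mat[OF smult_carrier_mat[OF BA]] by simp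
  have d1: "det M = det (x \<cdot>\<^sub>m 1\<^sub>m n - A * B)"
    unfolding eq1 det_mult[OF c1 c2] e1 e2 by simp
  have d2: "det M = x ^ n * det (1\<^sub>m k - (1/x) \<cdot>\<^sub>m (B * A))"
    unfolding eq2 det_mult[OF c3 c4] e3 e4 by simp
  have "x \<cdot>\<^sub>m 1\<^sub>m k - B * A = x \<cdot>\<^sub>m (1\<^sub>m k - (1/x) \<cdot>\<^sub>m (B * A))"
    using A B x by (intro eq_matI) (auto simp: right_diff_distrib)
  hence d3: "det (x \<cdot>\<^sub>m 1\<^sub>m k - B * A) = x ^ k * det (1\<^sub>m k - (1/x) \<cdot>\<^sub>m (B * A))"
    using A by (simp add: det_smult)
  show ?thesis using d1 d2 d3 by (simp add: mult_ac)
qed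

lemma poly_eq_nonzero:
  fixes p q :: "real poly"
  assumes "\<And>x. x \<noteq> 0 \<Longrightarrow> poly p x = poly q x"
  shows "p = q"
proof (rule ccontr)
  assume "p \<noteq> q"
  hence "p - q \<noteq> 0" by simp
  hence fin: "finite {x. poly (p - q) x = 0}" by (rule poly_roots_finite)
  have "{x::real. x \<noteq> 0} \<subseteq> {x. poly (p - q) x = 0}" using assms by auto
  hence "finite {x::real. x \<noteq> 0}" using fin finite_subset by blast
  moreover have "infinite {x::real. x \<noteq> 0}"
  proof
    assume "finite {x::real. x \<noteq> 0}"
    hence "finite (insert 0 {x::real. x \<noteq> 0})" by simp
    moreover have "insert 0 {x::real. x \<noteq> 0} = UNIV" by auto
    ultimately show False by (metis infinite_UNIV_char_0)
  qed
  ultimately show False by simp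
qed

lemma prod_scale:
  fixes c x :: real
  assumes "c \<noteq> 0"
  shows "c ^ length as * (\<Prod>a\<leftarrow>as. x / c - a) = (\<Prod>a\<leftarrow>as. x - c * a)"
  using assms by (induction as) (auto simp: field_simps)

lemma poly_lin_prod: "poly (\<Prod>a\<leftarrow>as. [:- a, 1:]) (x::real) = (\<Prod>a\<leftarrow>as. x - a)"
  by (induction as) (auto simp: algebra_simps)

lemma lin_prod_nz: "(\<Prod>a\<leftarrow>as. [:- a, 1:]) \<noteq> (0 :: real poly)"
  by (force simp: prod_list_zero_iff)

lemma poly_lin_prod2: "poly (\<Prod>a\<leftarrow>as. [:- (c * a), 1:]) (x::real) = (\<Prod>a\<leftarrow>as. x - c * a)"
  by (induction as) (auto simp: algebra_simps)

lemma proots_lin_prod0: "proots (\<Prod>a\<leftarrow>as. [:- a, 1:]) = mset (as :: real list)"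
proof (induction as)
  case (Cons a as)
  have "[:- a, 1:] \<noteq> (0::real poly)" by simp
  have eq: "(\<Prod>x\<leftarrow>a#as. [:- x, 1:]) = [:- a, 1:] * (\<Prod>x\<leftarrow>as. [:- x, 1:])" by simp
  show ?case by (simp only: eq proots_mult[OF \<open>[:- a, 1:] \<noteq> 0\<close> lin_prod_nz] proots_linear_factor Cons.IH) simp
qed simp

lemma proots_lin_prod: "proots (monom (1::real) d * (\<Prod>a\<leftarrow>as. [:- a, 1:])) = replicate_mset d 0 + mset as"
proof -
  have m: "monom (1::real) d = [:0, 1:] ^ d" by (simp add: monom_altdef)
  note nz = lin_prod_nz[of as]
  have "proots (\<Prod>a\<leftarrow>as. [:- a, 1:]) = mset as" by (rule proots_lin_prod0)
  moreover have "proots ([:0, 1:] ^ d :: real poly) = replicate_mset d 0"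
    by (simp add: proots_power)
  ultimately show ?thesis unfolding m using nz by (subst proots_mult) auto
qed

lemma char_poly_BSB:
  fixes Bm S :: "real mat"
  assumes Bm: "Bm \<in> carrier_mat n k" and BtB: "transpose_mat Bm * Bm = 1\<^sub>m k"
    and S: "S \<in> carrier_mat k k" and cS: "char_poly S = (\<Prod>a\<leftarrow>as. [:- a, 1:])"
    and len: "length as = k" and c: "c > 0" and kn: "k \<le> n"
  shows "char_poly (Bm * (c \<cdot>\<^sub>m S) * transpose_mat Bm) = monom 1 (n - k) * (\<Prod>a\<leftarrow>as. [:- (c * a), 1:])"
proof (rule poly_eq_nonzero)
  fix x :: real assume x: "x \<noteq> 0"
  have cSc: "c \<cdot>\<^sub>m S \<in> carrier_mat k k" using S by simp
  have Bt: "transpose_mat Bm \<in> carrier_mat k n" using Bm by simp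
  have R: "(c \<cdot>\<^sub>m S) * transpose_mat Bm \<in> carrier_mat k n" using cSc Bt by simp
  have eqa: "Bm * (c \<cdot>\<^sub>m S) * transpose_mat Bm = Bm * ((c \<cdot>\<^sub>m S) * transpose_mat Bm)"
    using Bm cSc Bt by (rule assoc_mult_mat)
  have eqb: "(c \<cdot>\<^sub>m S) * transpose_mat Bm * Bm = c \<cdot>\<^sub>m S"
    using assoc_mult_mat[OF cSc Bt Bm] BtB right_mult_one_mat[OF cSc] by simp
  have M: "Bm * (c \<cdot>\<^sub>m S) * transpose_mat Bm \<in> carrier_mat n n" using Bm cSc Bt by simp
  have "poly (char_poly (Bm * (c \<cdot>\<^sub>m S) * transpose_mat Bm)) x
      = det (x \<cdot>\<^sub>m 1\<^sub>m n - Bm * ((c \<cdot>\<^sub>m S) * transpose_mat Bm))"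
    using poly_char_det[OF M] eqa by simp
  also have "\<dots> = x ^ n * det (x \<cdot>\<^sub>m 1\<^sub>m k - c \<cdot>\<^sub>m S) / x ^ k"
    using sylvester_eval[OF Bm R x] eqb x by (simp add: field_simps)
  also have "x ^ n / x ^ k = x ^ (n - k)" using x kn by (simp add: power_diff)
  hence "x ^ n * det (x \<cdot>\<^sub>m 1\<^sub>m k - c \<cdot>\<^sub>m S) / x ^ k = x ^ (n - k) * det (x \<cdot>\<^sub>m 1\<^sub>m k - c \<cdot>\<^sub>m S)"
    by (metis times_divide_eq_right mult.commute)
  also have "x \<cdot>\<^sub>m 1\<^sub>m k - c \<cdot>\<^sub>m S = c \<cdot>\<^sub>m ((x / c) \<cdot>\<^sub>m 1\<^sub>m k - S)"
    using S c by (intro eq_matI) (auto simp: right_diff_distrib)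
  also have "det (c \<cdot>\<^sub>m ((x / c) \<cdot>\<^sub>m 1\<^sub>m k - S)) = c ^ k * det ((x / c) \<cdot>\<^sub>m 1\<^sub>m k - S)"
    using S by (simp add: det_smult)
  also have "det ((x / c) \<cdot>\<^sub>m 1\<^sub>m k - S) = (\<Prod>a\<leftarrow>as. x / c - a)"
    using poly_char_det[OF S, of "x / c"] cS poly_lin_prod by simp
  also have "c ^ k * (\<Prod>a\<leftarrow>as. x / c - a) = (\<Prod>a\<leftarrow>as. x - c * a)"
    using prod_scale[of c as x] c len by simp
  finally show "poly (char_poly (Bm * (c \<cdot>\<^sub>m S) * transpose_mat Bm)) x
     = poly (monom 1 (n - k) * (\<Prod>a\<leftarrow>as. [:- (c * a), 1:])) x"
    by (simp only: poly_mult poly_monom poly_lin_prod2)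
qed

lemma poly_map_of_real: "poly (map_poly of_real p) (of_real x :: complex) = of_real (poly p x)"
  by (induction p) (auto simp: map_poly_pCons)

lemma poly_lin_prod_c: "poly (\<Prod>a\<leftarrow>as. [:- a, 1:]) (x::'a::comm_ring_1) = (\<Prod>a\<leftarrow>as. x - a)"
  by (induction as) (auto simp: algebra_simps)

lemma real_sym_eig_real:
  fixes S :: "real mat"
  assumes S: "S \<in> carrier_mat k k" and sym: "transpose_mat S = S"
    and ev: "eigenvector (map_mat complex_of_real S) v z"
  shows "z \<in> \<real>"
proof -
  let ?SC = "map_mat complex_of_real S"
  from ev S have v: "v \<in> carrier_vec k" "v \<noteq> 0\<^sub>v k" "?SC *\<^sub>v v = z \<cdot>\<^sub>v v"
    unfolding eigenvector_def by auto
  have Av: "(\<Sum>b\<in>{0..<k}. of_real (S $$ (a,b)) * v $ b) = z * v $ a" if a: "a < k" for a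
  proof -
    have "(?SC *\<^sub>v v) $ a = (z \<cdot>\<^sub>v v) $ a" using v(3) by simp
    thus ?thesis using a S v(1) by (auto simp: scalar_prod_def)
  qed
  define Q where "Q = (\<Sum>a\<in>{0..<k}. cnj (v $ a) * (\<Sum>b\<in>{0..<k}. of_real (S $$ (a,b)) * v $ b))"
  define N where "N = (\<Sum>a\<in>{0..<k}. cnj (v $ a) * v $ a)"
  have "Q = (\<Sum>a\<in>{0..<k}. z * (cnj (v $ a) * v $ a))" unfolding Q_def
    by (rule sum.cong[OF refl]) (simp add: Av)
  hence QN: "Q = z * N" unfolding N_def by (simp add: sum_distrib_left)
  have symS: "S $$ (b,a) = S $$ (a,b)" if "a < k" "b < k" for a b
    using arg_cong[OF sym, of "\<lambda>M. M $$ (a,b)"] that S by auto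
  have "cnj Q = (\<Sum>a\<in>{0..<k}. \<Sum>b\<in>{0..<k}. v $ a * of_real (S $$ (a,b)) * cnj (v $ b))"
    unfolding Q_def by (simp add: sum_distrib_left mult_ac)
  also have "\<dots> = (\<Sum>b\<in>{0..<k}. \<Sum>a\<in>{0..<k}. v $ a * of_real (S $$ (a,b)) * cnj (v $ b))"
    by (rule sum.swap)
  also have "\<dots> = (\<Sum>a\<in>{0..<k}. \<Sum>b\<in>{0..<k}. cnj (v $ a) * of_real (S $$ (a,b)) * v $ b)"
    by (intro sum.cong refl) (simp add: symS mult_ac)
  also have "\<dots> = Q" unfolding Q_def by (simp add: sum_distrib_left mult_ac)
  finally have cQ: "cnj Q = Q" .
  have Nr: "N = of_real (\<Sum>a\<in>{0..<k}. (cmod (v $ a))\<^sup>2)"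
    unfolding N_def of_real_sum by (intro sum.cong refl) (metis complex_norm_square mult.commute)
  from v(1,2) obtain a where a: "a < k" "v $ a \<noteq> 0" by (auto simp: vec_eq_iff)
  have "(cmod (v $ a))\<^sup>2 \<le> (\<Sum>a\<in>{0..<k}. (cmod (v $ a))\<^sup>2)"
    by (rule member_le_sum) (use a in auto)
  moreover have "(cmod (v $ a))\<^sup>2 > 0" using a by simp
  ultimately have "(\<Sum>a\<in>{0..<k}. (cmod (v $ a))\<^sup>2) \<noteq> 0" by linarith
  hence "N \<noteq> 0" unfolding Nr by (simp only: of_real_eq_0_iff) simp
  moreover have "cnj N = N" unfolding Nr by simp
  ultimately have "cnj z = z" using cQ QN by (metis complex_cnj_mult mult_right_cancel)
  thus ?thesis using Reals_cnj_iff by blast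
qed

lemma prod_real_list: "(\<forall>c\<in>set cs. c \<in> \<real>) \<Longrightarrow> (\<Prod>c\<leftarrow>cs. complex_of_real x - c) = of_real (\<Prod>c\<leftarrow>cs. x - Re c)"
proof (induction cs)
  case (Cons a cs)
  have "Im a = 0" using Cons.prems by (simp add: complex_is_Real_iff)
  hence "complex_of_real x - a = of_real (x - Re a)" by (simp add: complex_eq_iff)
  thus ?case using Cons by simp
qed simp

lemma real_sym_split:
  fixes S :: "real mat"
  assumes S: "S \<in> carrier_mat k k" and sym: "transpose_mat S = S"
  shows "\<exists>as. char_poly S = (\<Prod>a\<leftarrow>as. [:- a, 1:]) \<and> length as = k"
proof -
  let ?SC = "map_mat complex_of_real S"
  have SC: "?SC \<in> carrier_mat k k" using S by simp
  have cp: "char_poly ?SC = map_poly of_real (char_poly S)"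
    using of_real_hom.char_poly_hom[OF S] by simp
  obtain cs where cs: "char_poly ?SC = (\<Prod>c\<leftarrow>cs. [:- c, 1:])" "length cs = k"
    using char_poly_factorized[OF SC] by blast
  have real: "c \<in> \<real>" if c: "c \<in> set cs" for c
  proof -
    have "poly (char_poly ?SC) c = 0" unfolding cs(1) using c
      by (induction cs) (auto simp: poly_prod_list)
    hence "eigenvalue ?SC c" using eigenvalue_root_char_poly[OF SC] by simp
    then obtain v where "eigenvector ?SC v c" unfolding eigenvalue_def by blast
    thus ?thesis using real_sym_eig_real[OF S sym] by blast
  qed
  define as where "as = map Re cs"
  have "poly (char_poly S) x = poly (\<Prod>a\<leftarrow>as. [:- a, 1:]) x" for x
  proof -
    have "complex_of_real (poly (char_poly S) x) = poly (char_poly ?SC) (of_real x)"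
      unfolding cp poly_map_of_real ..
    also have "\<dots> = (\<Prod>c\<leftarrow>cs. of_real x - c)" unfolding cs(1) by (simp add: poly_lin_prod_c)
    also have "\<dots> = of_real (\<Prod>a\<leftarrow>as. x - a)" unfolding as_def using real prod_real_list[of cs x]
      by (simp add: o_def)
    finally show ?thesis by (simp add: poly_lin_prod)
  qed
  hence "char_poly S = (\<Prod>a\<leftarrow>as. [:- a, 1:])" using poly_eq_poly_eq_iff by blast
  moreover have "length as = k" using cs(2) unfolding as_def by simp
  ultimately show ?thesis by blast
qed

lemma psd_roots_nonneg:
  fixes S :: "real mat"
  assumes S: "S \<in> carrier_mat k k" and psd: "\<And>v. v \<in> carrier_vec k \<Longrightarrow> v \<bullet> (S *\<^sub>v v) \<ge> 0"
    and cS: "char_poly S = (\<Prod>a\<leftarrow>as. [:- a, 1:])" and a: "a \<in> set as"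
  shows "a \<ge> 0"
proof -
  have "poly (char_poly S) a = 0" unfolding cS using a
    by (induction as) (auto simp: poly_prod_list)
  hence "eigenvalue S a" using eigenvalue_root_char_poly[OF S] by simp
  then obtain v where "eigenvector S v a" unfolding eigenvalue_def by blast
  with S have v: "v \<in> carrier_vec k" "v \<noteq> 0\<^sub>v k" "S *\<^sub>v v = a \<cdot>\<^sub>v v"
    unfolding eigenvector_def by auto
  from v(1,2) obtain i where i: "i < k" "v $ i \<noteq> 0" by (auto simp: vec_eq_iff)
  have vv: "v \<bullet> v = (\<Sum>j\<in>{0..<k}. (v $ j)\<^sup>2)" using v(1) by (simp add: scalar_prod_def power2_eq_square)
  have "(v $ i)\<^sup>2 \<le> (\<Sum>j\<in>{0..<k}. (v $ j)\<^sup>2)" by (rule member_le_sum) (use i in auto)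
  moreover have "(v $ i)\<^sup>2 > 0" using i by simp
  ultimately have pos: "v \<bullet> v > 0" unfolding vv by linarith
  have "v \<bullet> (S *\<^sub>v v) = a * (v \<bullet> v)" using v by simp
  with psd[OF v(1)] pos show ?thesis by (simp add: zero_le_mult_iff)
qed

lemma eig_main:
  fixes Om S :: "real mat"
  assumes cO: "char_poly Om = monom 1 (n - k) * (\<Prod>a\<leftarrow>as. [:- (c * a), 1:])"
    and cS: "char_poly S = (\<Prod>a\<leftarrow>as. [:- a, 1:])" and len: "length as = k"
    and nn: "\<forall>a\<in>set as. a \<ge> 0" and c: "c > 0" and kn: "k \<le> n"
  shows "(\<forall>i. 1 \<le> i \<and> i \<le> k \<longrightarrow> eig i Om = c * eig i S) \<and> (\<forall>i. k < i \<and> i \<le> n \<longrightarrow> eig i Om = 0)"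
proof -
  have e1: "(\<Prod>a\<leftarrow>as. [:- (c * a), 1:]) = (\<Prod>b\<leftarrow>map (\<lambda>a. c * a) as. [:- b, 1:])"
    by (simp add: o_def)
  have pO: "proots (char_poly Om) = mset (replicate (n - k) 0 @ map (\<lambda>a. c * a) as)"
    unfolding cO e1 proots_lin_prod by simp
  have pS: "proots (char_poly S) = mset as" unfolding cS by (rule proots_lin_prod0)
  have srt: "sort (replicate (n - k) 0 @ map (\<lambda>a. c * a) as) = replicate (n - k) 0 @ map (\<lambda>a. c * a) (sort as)"
  proof (rule properties_for_sort)
    show "mset (replicate (n - k) 0 @ map (\<lambda>a. c * a) (sort as)) = mset (replicate (n - k) 0 @ map (\<lambda>a. c * a) as)"
      by simp
    have "sorted (map (\<lambda>a. c * a) (sort as))"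
      by (simp add: sorted_map c mult_left_mono) 
    moreover have "\<forall>x\<in>set (map (\<lambda>a. c * a) (sort as)). 0 \<le> x" using nn c by auto
    ultimately show "sorted (replicate (n - k) 0 @ map (\<lambda>a. c * a) (sort as))"
      by (auto simp: sorted_append)
  qed
  have eO: "eigs_desc Om = map (\<lambda>a. c * a) (rev (sort as)) @ replicate (n - k) 0"
    unfolding eigs_desc_def pO sorted_list_of_multiset_mset srt by (simp add: rev_map)
  have eS: "eigs_desc S = rev (sort as)"
    unfolding eigs_desc_def pS sorted_list_of_multiset_mset ..
  show ?thesis
  proof (intro conjI allI impI)
    fix i assume i: "1 \<le> i \<and> i \<le> k"
    hence "i - 1 < length (map (\<lambda>a. c * a) (rev (sort as)))" using len by (simp, arith)
    thus "eig i Om = c * eig i S" unfolding eig_def eO eS nth_append by simp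
  next
    fix i assume i: "k < i \<and> i \<le> n"
    hence h1: "\<not> i - 1 < length (map (\<lambda>a. c * a) (rev (sort as)))" and h2: "i - 1 - k < n - k"
      using len by auto
    have "(map (\<lambda>a. c * a) (rev (sort as)) @ replicate (n - k) (0::real)) ! (i - 1) = replicate (n - k) 0 ! (i - 1 - k)"
      unfolding nth_append using h1 len by simp
    also have "\<dots> = 0" using h2 by simp
    finally show "eig i Om = 0" unfolding eig_def eO .
  qed
qed

lemma eig_abstract:
  fixes Bm S Om :: "real mat"
  assumes Bm: "Bm \<in> carrier_mat n k" and BtB: "transpose_mat Bm * Bm = 1\<^sub>m k"
    and S: "S \<in> carrier_mat k k" and sym: "transpose_mat S = S"
    and psd: "\<And>v. v \<in> carrier_vec k \<Longrightarrow> v \<bullet> (S *\<^sub>v v) \<ge> 0"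
    and c: "c > 0" and kn: "k \<le> n" and Om: "Om = Bm * (c \<cdot>\<^sub>m S) * transpose_mat Bm"
  shows "(\<forall>i. 1 \<le> i \<and> i \<le> k \<longrightarrow> eig i Om = c * eig i S) \<and> (\<forall>i. k < i \<and> i \<le> n \<longrightarrow> eig i Om = 0)"
proof -
  obtain as where as: "char_poly S = (\<Prod>a\<leftarrow>as. [:- a, 1:])" "length as = k"
    using real_sym_split[OF S sym] by blast
  have nn: "\<forall>a\<in>set as. a \<ge> 0" using psd_roots_nonneg[OF S psd as(1)] by blast
  have "char_poly Om = monom 1 (n - k) * (\<Prod>a\<leftarrow>as. [:- (c * a), 1:])"
    unfolding Om by (rule char_poly_BSB[OF Bm BtB S as c kn])
  from eig_main[OF this as nn c kn] show ?thesis .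
qed

lemma vnorm_sq: "(vnorm n x)\<^sup>2 = (\<Sum>i<n. (x i)\<^sup>2)"
  unfolding vnorm_def by (simp add: sum_nonneg)

lemma vnorm_nonneg: "vnorm n x \<ge> 0"
  unfolding vnorm_def by (simp add: sum_nonneg)

lemma group_sum:
  assumes l: "\<forall>i<n. l i < K"
  shows "(\<Sum>i<n. (\<theta> i)\<^sup>2 * g (l i)) = (\<Sum>k<K. (vnorm n (restr l \<theta> k))\<^sup>2 * g k)"
proof -
  have "(vnorm n (restr l \<theta> k))\<^sup>2 = (\<Sum>i\<in>{i\<in>{..<n}. l i = k}. (\<theta> i)\<^sup>2)" for k
  proof -
    have "(\<Sum>i<n. (restr l \<theta> k i)\<^sup>2) = (\<Sum>i<n. if l i = k then (\<theta> i)\<^sup>2 else 0)"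
      by (rule sum.cong) (auto simp: restr_def)
    also have "\<dots> = (\<Sum>i\<in>{i\<in>{..<n}. l i = k}. (\<theta> i)\<^sup>2)"
      by (rule sum.inter_filter[symmetric]) simp
    finally show ?thesis unfolding vnorm_sq .
  qed
  hence "(\<Sum>k<K. (vnorm n (restr l \<theta> k))\<^sup>2 * g k) = (\<Sum>k<K. \<Sum>i\<in>{i\<in>{..<n}. l i = k}. (\<theta> i)\<^sup>2 * g (l i))"
    by (simp add: sum_distrib_right)
  also have "\<dots> = (\<Sum>i<n. (\<theta> i)\<^sup>2 * g (l i))"
    by (rule sum.group) (use l in auto)
  finally show ?thesis by simp
qed

lemma nu_pos:
  assumes "\<forall>i<n. 0 < \<theta> i" "\<exists>i<n. l i = k"
  shows "vnorm n (restr l \<theta> k) > 0"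
proof -
  from assms obtain i where i: "i < n" "l i = k" "\<theta> i > 0" by blast
  have "(restr l \<theta> k i)\<^sup>2 \<le> (\<Sum>j<n. (restr l \<theta> k j)\<^sup>2)" by (rule member_le_sum) (use i in auto)
  moreover have "(restr l \<theta> k i)\<^sup>2 > 0" using i by (simp add: restr_def)
  ultimately have "(vnorm n (restr l \<theta> k))\<^sup>2 > 0" unfolding vnorm_sq by linarith
  thus ?thesis using vnorm_nonneg[of n "restr l \<theta> k"] by (simp add: zero_less_power2 less_le)
qed

lemma delta_sum_l: "(k0::nat) < K \<Longrightarrow> (\<Sum>t\<in>{0..<K}. (if k0 = t then a else 0) * (f t :: real)) = a * f k0"
  by (simp add: if_distrib[of "\<lambda>x. x * _"] sum.delta' cong: if_cong)

lemma delta_sum_l2: "(k0::nat) < K \<Longrightarrow> (\<Sum>t\<in>{0..<K}. (if k0 = t then h t else 0) * (f t :: real)) = h k0 * f k0"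
  by (simp add: if_distrib[of "\<lambda>x. x * _"] sum.delta' cong: if_cong)

lemma delta_sum_r: "(k0::nat) < K \<Longrightarrow> (\<Sum>t\<in>{0..<K}. (f t :: real) * (if k0 = t then a else 0)) = f k0 * a"
  by (simp add: if_distrib[of "\<lambda>x. _ * x"] sum.delta' cong: if_cong)

lemma diag_prod_entry:
  fixes X :: "real mat"
  assumes X: "X \<in> carrier_mat k k'" and a: "a < k" and b: "b < k'"
  shows "(mat k k (\<lambda>(a,b). if a = b then f a else 0) * X * mat k' k' (\<lambda>(a,b). if a = b then g a else 0)) $$ (a,b)
        = f a * X $$ (a,b) * g b"
proof -
  have 1: "(mat k k (\<lambda>(a,b). if a = b then f a else 0) * X) $$ (a,t) = f a * X $$ (a,t)" if t: "t < k'" for t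
    using X a t by (simp add: scalar_prod_def if_distrib[of "\<lambda>x. x * _"] sum.delta' cong: if_cong)
  show ?thesis using X a b
    by (simp add: scalar_prod_def delta_sum_l2 if_distrib[of "\<lambda>x. _ * x"] sum.delta cong: if_cong)
qed

definition Bmat :: "nat \<Rightarrow> nat \<Rightarrow> (nat \<Rightarrow> nat) \<Rightarrow> (nat \<Rightarrow> real) \<Rightarrow> real mat" where
  "Bmat K n l \<theta> = mat n K (\<lambda>(i,k). if l i = k then \<theta> i / vnorm n (restr l \<theta> k) else 0)"

lemma delta_sum_r2: "(k0::nat) < K \<Longrightarrow> (\<Sum>t\<in>{0..<K}. (f t :: real) * (if k0 = t then h t else 0)) = f k0 * h k0"
  by (simp add: if_distrib[of "\<lambda>x. _ * x"] sum.delta' cong: if_cong)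

lemma Bmat_carrier: "Bmat K n l \<theta> \<in> carrier_mat n K"
  unfolding Bmat_def by simp

lemma Bmat_BtB:
  assumes l: "\<forall>i<n. l i < K" and nu: "\<forall>k<K. vnorm n (restr l \<theta> k) > 0"
  shows "transpose_mat (Bmat K n l \<theta>) * Bmat K n l \<theta> = 1\<^sub>m K"
proof (rule eq_matI)
  fix a b assume ab: "a < dim_row (1\<^sub>m K :: real mat)" "b < dim_col (1\<^sub>m K :: real mat)"
  hence a: "a < K" and b: "b < K" by auto
  let ?nu = "\<lambda>k. vnorm n (restr l \<theta> k)"
  define g where "g k = (if k = a \<and> k = b then 1 / (?nu a * ?nu b) else 0)" for k
  have "(transpose_mat (Bmat K n l \<theta>) * Bmat K n l \<theta>) $$ (a,b)
      = (\<Sum>i\<in>{0..<n}. (if l i = a then \<theta> i / ?nu a else 0) * (if l i = b then \<theta> i / ?nu b else 0))"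
    using a b unfolding Bmat_def by (simp add: scalar_prod_def)
  also have "\<dots> = (\<Sum>i<n. (\<theta> i)\<^sup>2 * g (l i))"
    unfolding atLeast0LessThan g_def by (rule sum.cong) (auto simp: power2_eq_square)
  also have "\<dots> = (\<Sum>k<K. (?nu k)\<^sup>2 * g k)" by (rule group_sum[OF l])
  also have "\<dots> = (if a = b then 1 else 0)"
    unfolding g_def using a b nu by (auto simp: power2_eq_square if_distrib[of "\<lambda>x. _ * x"] sum.delta cong: if_cong)
  also have "\<dots> = (1\<^sub>m K :: real mat) $$ (a,b)" using a b by simp
  finally show "(transpose_mat (Bmat K n l \<theta>) * Bmat K n l \<theta>) $$ (a,b) = (1\<^sub>m K :: real mat) $$ (a,b)" .
qed (auto simp: Bmat_def)

lemma Bmat_left_entry: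
  fixes X :: "real mat"
  assumes X: "X \<in> carrier_mat K k'" and l: "\<forall>i<n. l i < K" and i: "i < n" and b: "b < k'"
  shows "(Bmat K n l \<theta> * X) $$ (i,b) = \<theta> i / vnorm n (restr l \<theta> (l i)) * X $$ (l i, b)"
  using X l i b unfolding Bmat_def by (simp add: scalar_prod_def delta_sum_l2)

lemma Bmat_entry:
  fixes X :: "real mat"
  assumes X: "X \<in> carrier_mat K K" and l: "\<forall>i<n. l i < K" and i: "i < n" and j: "j < n"
  shows "(Bmat K n l \<theta> * X * transpose_mat (Bmat K n l \<theta>)) $$ (i,j)
       = \<theta> i / vnorm n (restr l \<theta> (l i)) * X $$ (l i, l j) * (\<theta> j / vnorm n (restr l \<theta> (l j)))"
proof -
  have BX: "Bmat K n l \<theta> * X \<in> carrier_mat n K" using X Bmat_carrier by (rule mult_carrier_mat[rotated])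
  have "(Bmat K n l \<theta> * X * transpose_mat (Bmat K n l \<theta>)) $$ (i,j)
     = (\<Sum>b\<in>{0..<K}. (Bmat K n l \<theta> * X) $$ (i,b) * (if l j = b then \<theta> j / vnorm n (restr l \<theta> b) else 0))"
    using BX i j by (auto simp: scalar_prod_def Bmat_def intro!: sum.cong)
  also have "\<dots> = (Bmat K n l \<theta> * X) $$ (i, l j) * (\<theta> j / vnorm n (restr l \<theta> (l j)))"
    by (rule delta_sum_r2) (use l j in auto)
  also have "\<dots> = \<theta> i / vnorm n (restr l \<theta> (l i)) * X $$ (l i, l j) * (\<theta> j / vnorm n (restr l \<theta> (l j)))"
    using Bmat_left_entry[OF X l i, of "l j"] l j by simp
  finally show ?thesis .
qed

lemma Umat_eq:
  assumes J: "J \<in> carrier_mat K K" and l: "\<forall>i<n. l i < K"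
  shows "Umat K n l \<theta> J = Bmat K n l \<theta> * J"
  by (rule eq_matI) (use J l Bmat_left_entry[OF J l] in \<open>auto simp: Umat_def Bmat_def\<close>)

lemma mult_tr_entry:
  fixes X :: "real mat"
  assumes X: "X \<in> carrier_mat k k'" and a: "a < k" and b: "b < k"
  shows "(X * transpose_mat X) $$ (a,b) = (\<Sum>c<k'. X $$ (a,c) * X $$ (b,c))"
  using X a b by (simp add: scalar_prod_def atLeast0LessThan)

definition Gfun :: "nat \<Rightarrow> nat \<Rightarrow> nat \<Rightarrow> nat \<Rightarrow> nat \<Rightarrow> (nat \<Rightarrow> nat) \<Rightarrow> (nat \<Rightarrow> nat)
   \<Rightarrow> (nat \<Rightarrow> real) \<Rightarrow> (nat \<Rightarrow> real) \<Rightarrow> real mat \<Rightarrow> (nat \<Rightarrow> real mat) \<Rightarrow> nat \<Rightarrow> nat \<Rightarrow> real" where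
  "Gfun K K' Q n m l r \<theta> \<delta> E F a b =
     (\<Sum>c<K. (vnorm n (restr l \<theta> c))\<^sup>2 * (E $$ (a,c) * E $$ (b,c))) +
     (\<Sum>q\<in>{1..Q}. \<Sum>d<K'. (vnorm m (restr r \<delta> d))\<^sup>2 * (F q $$ (a,d) * F q $$ (b,d)))"

lemma Omega0_carrier: "Omega0 n l \<theta> E \<in> carrier_mat n n" unfolding Omega0_def by simp
lemma OmegaQ_carrier: "OmegaQ n m l r \<theta> \<delta> Fq \<in> carrier_mat n m" unfolding OmegaQ_def by simp

lemma Omega_M_carrier: "Omega_M Q n m l r \<theta> \<delta> E F \<in> carrier_mat n n"
  unfolding Omega_M_def mat_sum_def using Omega0_carrier[of n l \<theta> E] by simp

lemma Omega_entry:
  assumes l: "\<forall>i<n. l i < K" and r: "\<forall>j<m. r j < K'" and i: "i < n" and j: "j < n"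
  shows "Omega_M Q n m l r \<theta> \<delta> E F $$ (i,j) = \<theta> i * \<theta> j * Gfun K K' Q n m l r \<theta> \<delta> E F (l i) (l j)"
proof -
  have O0: "(Omega0 n l \<theta> E * transpose_mat (Omega0 n l \<theta> E)) $$ (i,j)
      = \<theta> i * \<theta> j * (\<Sum>c<K. (vnorm n (restr l \<theta> c))\<^sup>2 * (E $$ (l i,c) * E $$ (l j,c)))"
  proof -
    have "(Omega0 n l \<theta> E * transpose_mat (Omega0 n l \<theta> E)) $$ (i,j)
        = (\<Sum>t<n. Omega0 n l \<theta> E $$ (i,t) * Omega0 n l \<theta> E $$ (j,t))"
      by (rule mult_tr_entry[OF Omega0_carrier i j])
    also have "\<dots> = \<theta> i * \<theta> j * (\<Sum>t<n. (\<theta> t)\<^sup>2 * (E $$ (l i, l t) * E $$ (l j, l t)))"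
      unfolding sum_distrib_left using i j
      by (intro sum.cong refl) (simp add: Omega0_def power2_eq_square mult_ac)
    also have "(\<Sum>t<n. (\<theta> t)\<^sup>2 * (E $$ (l i, l t) * E $$ (l j, l t)))
        = (\<Sum>c<K. (vnorm n (restr l \<theta> c))\<^sup>2 * (E $$ (l i,c) * E $$ (l j,c)))"
      by (rule group_sum[OF l, where g = "\<lambda>c. E $$ (l i,c) * E $$ (l j,c)"])
    finally show ?thesis .
  qed
  have OQ: "(OmegaQ n m l r \<theta> \<delta> (F q) * transpose_mat (OmegaQ n m l r \<theta> \<delta> (F q))) $$ (i,j)
      = \<theta> i * \<theta> j * (\<Sum>d<K'. (vnorm m (restr r \<delta> d))\<^sup>2 * (F q $$ (l i,d) * F q $$ (l j,d)))" for q
  proof -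
    have "(OmegaQ n m l r \<theta> \<delta> (F q) * transpose_mat (OmegaQ n m l r \<theta> \<delta> (F q))) $$ (i,j)
        = (\<Sum>t<m. OmegaQ n m l r \<theta> \<delta> (F q) $$ (i,t) * OmegaQ n m l r \<theta> \<delta> (F q) $$ (j,t))"
      by (rule mult_tr_entry[OF OmegaQ_carrier i j])
    also have "\<dots> = \<theta> i * \<theta> j * (\<Sum>t<m. (\<delta> t)\<^sup>2 * (F q $$ (l i, r t) * F q $$ (l j, r t)))"
      unfolding sum_distrib_left using i j
      by (intro sum.cong refl) (simp add: OmegaQ_def power2_eq_square mult_ac)
    also have "(\<Sum>t<m. (\<delta> t)\<^sup>2 * (F q $$ (l i, r t) * F q $$ (l j, r t)))
        = (\<Sum>d<K'. (vnorm m (restr r \<delta> d))\<^sup>2 * (F q $$ (l i,d) * F q $$ (l j,d)))"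
      by (rule group_sum[OF r, where g = "\<lambda>d. F q $$ (l i,d) * F q $$ (l j,d)"])
    finally show ?thesis .
  qed
  have "Omega_M Q n m l r \<theta> \<delta> E F $$ (i,j)
     = (Omega0 n l \<theta> E * transpose_mat (Omega0 n l \<theta> E)) $$ (i,j)
       + (\<Sum>q\<in>{1..Q}. (OmegaQ n m l r \<theta> \<delta> (F q) * transpose_mat (OmegaQ n m l r \<theta> \<delta> (F q))) $$ (i,j))"
    unfolding Omega_M_def mat_sum_def using i j by simp
  also have "\<dots> = \<theta> i * \<theta> j * Gfun K K' Q n m l r \<theta> \<delta> E F (l i) (l j)"
    unfolding O0 OQ Gfun_def by (simp add: sum_distrib_left distrib_left)
  finally show ?thesis .
qed

lemma Psi_carrier[simp]: "Psi K n l \<theta> \<in> carrier_mat K K" unfolding Psi_def by simp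

lemma Psi_prod_entry:
  fixes X :: "real mat"
  assumes X: "X \<in> carrier_mat K K'" and a: "a < K" and b: "b < K'"
  shows "(Psi K n l \<theta> * X * Psi K' m r \<delta>) $$ (a,b)
       = vnorm n (restr l \<theta> a) / vnorm n \<theta> * X $$ (a,b) * (vnorm m (restr r \<delta> b) / vnorm m \<delta>)"
  unfolding Psi_def by (rule diag_prod_entry[OF X a b])

lemma Sbar_entry:
  assumes T: "vnorm n \<theta> > 0" and D: "vnorm m \<delta> > 0" and a: "a < K" and b: "b < K"
    and E: "E \<in> carrier_mat K K" and F: "\<forall>q\<in>{1..Q}. F q \<in> carrier_mat K K'"
  shows "Sbar K K' Q n m l r \<theta> \<delta> E F $$ (a,b)
       = vnorm n (restr l \<theta> a) * vnorm n (restr l \<theta> b) / ((vnorm n \<theta>)\<^sup>2 * (vnorm m \<delta>)\<^sup>2)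
         * Gfun K K' Q n m l r \<theta> \<delta> E F a b"
proof -
  define T' where "T' = vnorm n \<theta>"
  define D' where "D' = vnorm m \<delta>"
  define nu where "nu k = vnorm n (restr l \<theta> k)" for k
  define mu where "mu d = vnorm m (restr r \<delta> d)" for d
  define S0 where "S0 = Psi K n l \<theta> * E * Psi K n l \<theta>"
  define S where "S q = Psi K n l \<theta> * F q * Psi K' m r \<delta>" for q
  have S0c: "S0 \<in> carrier_mat K K" unfolding S0_def using E Psi_carrier[of K n l \<theta>] by (meson mult_carrier_mat)
  have S0e: "S0 $$ (x,c) = nu x / T' * E $$ (x,c) * (nu c / T')" if "x < K" "c < K" for x c
    unfolding S0_def nu_def T'_def using Psi_prod_entry[OF E that] .
  have Sc: "S q \<in> carrier_mat K K'" if "q \<in> {1..Q}" for q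
    unfolding S_def using F that Psi_carrier[of K n l \<theta>] Psi_carrier[of K' m r \<delta>] by (meson mult_carrier_mat)
  have Se: "S q $$ (x,d) = nu x / T' * F q $$ (x,d) * (mu d / D')" if "q \<in> {1..Q}" "x < K" "d < K'" for q x d
    unfolding S_def nu_def T'_def mu_def D'_def using Psi_prod_entry[of "F q" K K' x d] F that by simp
  have "Sbar K K' Q n m l r \<theta> \<delta> E F $$ (a,b)
      = T'\<^sup>2 / D'\<^sup>2 * (S0 * transpose_mat S0) $$ (a,b) + (\<Sum>q\<in>{1..Q}. (S q * transpose_mat (S q)) $$ (a,b))"
    unfolding Sbar_def Let_def mat_sum_def S0_def[symmetric] S_def[symmetric] T'_def D'_def
    using a b S0c by simp
  also have "(S0 * transpose_mat S0) $$ (a,b) = nu a * nu b / T'^4 * (\<Sum>c<K. (nu c)\<^sup>2 * (E $$ (a,c) * E $$ (b,c)))"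
    unfolding mult_tr_entry[OF S0c a b] sum_distrib_left
    by (intro sum.cong refl) (use a b in \<open>auto simp: S0e power2_eq_square power4_eq_xxxx field_simps\<close>)
  also have "(\<Sum>q\<in>{1..Q}. (S q * transpose_mat (S q)) $$ (a,b))
      = (\<Sum>q\<in>{1..Q}. nu a * nu b / (T'\<^sup>2 * D'\<^sup>2) * (\<Sum>d<K'. (mu d)\<^sup>2 * (F q $$ (a,d) * F q $$ (b,d))))"
  proof (rule sum.cong[OF refl])
    fix q assume q: "q \<in> {1..Q}"
    show "(S q * transpose_mat (S q)) $$ (a,b) = nu a * nu b / (T'\<^sup>2 * D'\<^sup>2) * (\<Sum>d<K'. (mu d)\<^sup>2 * (F q $$ (a,d) * F q $$ (b,d)))"
      unfolding mult_tr_entry[OF Sc[OF q] a b] sum_distrib_left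
      by (intro sum.cong refl) (use a b q in \<open>auto simp: Se power2_eq_square field_simps\<close>)
  qed
  also have "(\<Sum>q\<in>{1..Q}. nu a * nu b / (T'\<^sup>2 * D'\<^sup>2) * (\<Sum>d<K'. (mu d)\<^sup>2 * (F q $$ (a,d) * F q $$ (b,d))))
     = nu a * nu b / (T'\<^sup>2 * D'\<^sup>2) * (\<Sum>q\<in>{1..Q}. (\<Sum>d<K'. (mu d)\<^sup>2 * (F q $$ (a,d) * F q $$ (b,d))))"
    by (rule sum_distrib_left[symmetric])
  finally show ?thesis
    unfolding Gfun_def nu_def[symmetric] mu_def[symmetric] T'_def[symmetric] D'_def[symmetric]
    using T D unfolding T'_def[symmetric] D'_def[symmetric]
    by (simp add: field_simps power4_eq_xxxx power2_eq_square)
qed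

lemma quad_sum:
  fixes x :: "'a \<Rightarrow> real" and w :: "'i \<Rightarrow> real" and y :: "'a \<Rightarrow> 'i \<Rightarrow> real"
  shows "(\<Sum>a\<in>A. \<Sum>b\<in>A. x a * x b * (\<Sum>c\<in>C. w c * (y a c * y b c)))
       = (\<Sum>c\<in>C. w c * (\<Sum>a\<in>A. x a * y a c)\<^sup>2)"
proof -
  have "(\<Sum>a\<in>A. \<Sum>b\<in>A. x a * x b * (\<Sum>c\<in>C. w c * (y a c * y b c)))
      = (\<Sum>a\<in>A. \<Sum>b\<in>A. \<Sum>c\<in>C. w c * (x a * y a c) * (x b * y b c))"
    by (simp add: sum_distrib_left mult_ac)
  also have "\<dots> = (\<Sum>a\<in>A. \<Sum>c\<in>C. \<Sum>b\<in>A. w c * (x a * y a c) * (x b * y b c))"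
    by (rule sum.cong[OF refl], rule sum.swap)
  also have "\<dots> = (\<Sum>c\<in>C. \<Sum>a\<in>A. \<Sum>b\<in>A. w c * (x a * y a c) * (x b * y b c))"
    by (rule sum.swap)
  also have "\<dots> = (\<Sum>c\<in>C. w c * (\<Sum>a\<in>A. x a * y a c)\<^sup>2)"
    by (simp add: power2_eq_square sum_product sum_distrib_left mult_ac)
  finally show ?thesis .
qed

lemma Sbar_carrier: "Sbar K K' Q n m l r \<theta> \<delta> E F \<in> carrier_mat K K"
  unfolding carrier_mat_def Sbar_def Let_def mat_sum_def Psi_def by simp

lemma Gfun_sym: "Gfun K K' Q n m l r \<theta> \<delta> E F a b = Gfun K K' Q n m l r \<theta> \<delta> E F b a"
  unfolding Gfun_def by (simp add: mult.commute)

lemma Sbar_sym: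
  assumes T: "vnorm n \<theta> > 0" and D: "vnorm m \<delta> > 0"
    and E: "E \<in> carrier_mat K K" and F: "\<forall>q\<in>{1..Q}. F q \<in> carrier_mat K K'"
  shows "transpose_mat (Sbar K K' Q n m l r \<theta> \<delta> E F) = Sbar K K' Q n m l r \<theta> \<delta> E F"
proof (rule eq_matI)
  fix a b assume "a < dim_row (Sbar K K' Q n m l r \<theta> \<delta> E F)" "b < dim_col (Sbar K K' Q n m l r \<theta> \<delta> E F)"
  hence a: "a < K" and b: "b < K" using Sbar_carrier[of K K' Q n m l r \<theta> \<delta> E F] by auto
  show "transpose_mat (Sbar K K' Q n m l r \<theta> \<delta> E F) $$ (a, b) = Sbar K K' Q n m l r \<theta> \<delta> E F $$ (a, b)"
    using a b Sbar_carrier[of K K' Q n m l r \<theta> \<delta> E F]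
    by (simp add: Sbar_entry[OF T D _ _ E F] Gfun_sym[of _ _ _ _ _ _ _ _ _ _ _ a b] mult.commute)
qed (use Sbar_carrier[of K K' Q n m l r \<theta> \<delta> E F] in auto)

lemma Sbar_psd:
  assumes T: "vnorm n \<theta> > 0" and D: "vnorm m \<delta> > 0"
    and E: "E \<in> carrier_mat K K" and F: "\<forall>q\<in>{1..Q}. F q \<in> carrier_mat K K'"
    and v: "v \<in> carrier_vec K"
  shows "v \<bullet> (Sbar K K' Q n m l r \<theta> \<delta> E F *\<^sub>v v) \<ge> 0"
proof -
  let ?S = "Sbar K K' Q n m l r \<theta> \<delta> E F"
  let ?G = "Gfun K K' Q n m l r \<theta> \<delta> E F"
  define x where "x a = v $ a * vnorm n (restr l \<theta> a)" for a
  define Z where "Z = (vnorm n \<theta>)\<^sup>2 * (vnorm m \<delta>)\<^sup>2"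
  have Z: "Z > 0" unfolding Z_def using T D by simp
  have "v \<bullet> (?S *\<^sub>v v) = (\<Sum>a\<in>{0..<K}. v $ a * (\<Sum>b\<in>{0..<K}. ?S $$ (a,b) * v $ b))"
    using v Sbar_carrier[of K K' Q n m l r \<theta> \<delta> E F] by (simp add: scalar_prod_def)
  also have "\<dots> = (\<Sum>a\<in>{0..<K}. \<Sum>b\<in>{0..<K}. x a * x b * ?G a b) / Z"
    unfolding sum_divide_distrib sum_distrib_left
    by (intro sum.cong refl) (simp add: Sbar_entry[OF T D _ _ E F] x_def Z_def field_simps)
  finally have eq: "v \<bullet> (?S *\<^sub>v v) = (\<Sum>a\<in>{0..<K}. \<Sum>b\<in>{0..<K}. x a * x b * ?G a b) / Z" .
  have "(\<Sum>a\<in>{0..<K}. \<Sum>b\<in>{0..<K}. x a * x b * ?G a b)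
     = (\<Sum>a\<in>{0..<K}. \<Sum>b\<in>{0..<K}. x a * x b * (\<Sum>c<K. (vnorm n (restr l \<theta> c))\<^sup>2 * (E $$ (a,c) * E $$ (b,c))))
       + (\<Sum>q\<in>{1..Q}. \<Sum>a\<in>{0..<K}. \<Sum>b\<in>{0..<K}. x a * x b * (\<Sum>d<K'. (vnorm m (restr r \<delta> d))\<^sup>2 * (F q $$ (a,d) * F q $$ (b,d))))"
  proof -
    have "(\<Sum>a\<in>{0..<K}. \<Sum>b\<in>{0..<K}. x a * x b * ?G a b)
       = (\<Sum>a\<in>{0..<K}. \<Sum>b\<in>{0..<K}. x a * x b * (\<Sum>c<K. (vnorm n (restr l \<theta> c))\<^sup>2 * (E $$ (a,c) * E $$ (b,c))))
       + (\<Sum>a\<in>{0..<K}. \<Sum>b\<in>{0..<K}. \<Sum>q\<in>{1..Q}. x a * x b * (\<Sum>d<K'. (vnorm m (restr r \<delta> d))\<^sup>2 * (F q $$ (a,d) * F q $$ (b,d))))"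
      unfolding Gfun_def by (simp add: distrib_left sum.distrib sum_distrib_left)
    also have "(\<Sum>a\<in>{0..<K}. \<Sum>b\<in>{0..<K}. \<Sum>q\<in>{1..Q}. x a * x b * (\<Sum>d<K'. (vnorm m (restr r \<delta> d))\<^sup>2 * (F q $$ (a,d) * F q $$ (b,d))))
       = (\<Sum>q\<in>{1..Q}. \<Sum>a\<in>{0..<K}. \<Sum>b\<in>{0..<K}. x a * x b * (\<Sum>d<K'. (vnorm m (restr r \<delta> d))\<^sup>2 * (F q $$ (a,d) * F q $$ (b,d))))"
      by (subst sum.swap, rule sum.cong[OF refl], rule sum.swap)
    finally show ?thesis .
  qed
  also have "\<dots> \<ge> 0"
    unfolding quad_sum by (intro add_nonneg_nonneg sum_nonneg mult_nonneg_nonneg) auto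
  finally have "(\<Sum>a\<in>{0..<K}. \<Sum>b\<in>{0..<K}. x a * x b * ?G a b) \<ge> 0" .
  thus ?thesis unfolding eq using Z by simp
qed

lemma vnorm_pos:
  assumes "i < n" "x i \<noteq> 0"
  shows "vnorm n x > 0"
proof -
  have "(x i)\<^sup>2 \<le> (\<Sum>j<n. (x j)\<^sup>2)" by (rule member_le_sum) (use assms in auto)
  moreover have "(x i)\<^sup>2 > 0" using assms by simp
  ultimately have "(vnorm n x)\<^sup>2 > 0" unfolding vnorm_sq by linarith
  thus ?thesis using vnorm_nonneg[of n x] by (simp add: less_le)
qed

lemma model_facts:
  assumes mo: "model_ok K K' Q n m l r \<theta> \<delta> E F" and K: "1 \<le> K" and K': "1 \<le> K'"
  shows "\<forall>i<n. l i < K" "\<forall>j<m. r j < K'" "\<forall>i<n. 0 < \<theta> i" "vnorm n \<theta> > 0" "vnorm m \<delta> > 0"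
    "\<forall>k<K. vnorm n (restr l \<theta> k) > 0" "E \<in> carrier_mat K K" "\<forall>q\<in>{1..Q}. F q \<in> carrier_mat K K'"
    "K \<le> n"
proof -
  from mo show l: "\<forall>i<n. l i < K" and "\<forall>j<m. r j < K'" and th: "\<forall>i<n. 0 < \<theta> i"
    and "E \<in> carrier_mat K K" and "\<forall>q\<in>{1..Q}. F q \<in> carrier_mat K K'"
    unfolding model_ok_def by auto
  from mo K obtain i where i: "i < n" "l i = 0" unfolding model_ok_def by auto
  from mo K' obtain j where j: "j < m" "r j = 0" unfolding model_ok_def by auto
  show "vnorm n \<theta> > 0" using vnorm_pos[of i n \<theta>] i th by auto
  show "vnorm m \<delta> > 0" using vnorm_pos[of j m \<delta>] j mo unfolding model_ok_def by auto
  show "\<forall>k<K. vnorm n (restr l \<theta> k) > 0"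
    using nu_pos[OF th] mo unfolding model_ok_def by auto
  have "{0..<K} \<subseteq> l ` {0..<n}" using mo unfolding model_ok_def by auto
  hence "card {0..<K} \<le> card (l ` {0..<n})" by (intro card_mono) auto
  also have "\<dots> \<le> card {0..<n}" by (rule card_image_le) simp
  finally show "K \<le> n" by simp
qed

lemma Omega_factor:
  assumes l: "\<forall>i<n. l i < K" and r: "\<forall>j<m. r j < K'" and T: "vnorm n \<theta> > 0" and D: "vnorm m \<delta> > 0"
    and nu: "\<forall>k<K. vnorm n (restr l \<theta> k) > 0"
    and E: "E \<in> carrier_mat K K" and F: "\<forall>q\<in>{1..Q}. F q \<in> carrier_mat K K'"
  shows "Omega_M Q n m l r \<theta> \<delta> E F
     = Bmat K n l \<theta> * (((vnorm n \<theta>)\<^sup>2 * (vnorm m \<delta>)\<^sup>2) \<cdot>\<^sub>m Sbar K K' Q n m l r \<theta> \<delta> E F) * transpose_mat (Bmat K n l \<theta>)"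
proof (rule eq_matI)
  let ?c = "(vnorm n \<theta>)\<^sup>2 * (vnorm m \<delta>)\<^sup>2"
  let ?S = "Sbar K K' Q n m l r \<theta> \<delta> E F"
  have X: "?c \<cdot>\<^sub>m ?S \<in> carrier_mat K K" using Sbar_carrier by simp
  fix i j assume "i < dim_row (Bmat K n l \<theta> * (?c \<cdot>\<^sub>m ?S) * transpose_mat (Bmat K n l \<theta>))"
    "j < dim_col (Bmat K n l \<theta> * (?c \<cdot>\<^sub>m ?S) * transpose_mat (Bmat K n l \<theta>))"
  hence i: "i < n" and j: "j < n" by (auto simp: Bmat_def)
  have li: "l i < K" and lj: "l j < K" using l i j by auto
  have n1: "vnorm n (restr l \<theta> (l i)) > 0" and n2: "vnorm n (restr l \<theta> (l j)) > 0" using nu li lj by auto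
  show "Omega_M Q n m l r \<theta> \<delta> E F $$ (i, j) = (Bmat K n l \<theta> * (?c \<cdot>\<^sub>m ?S) * transpose_mat (Bmat K n l \<theta>)) $$ (i, j)"
    unfolding Bmat_entry[OF X l i j] Omega_entry[OF l r i j]
    using Sbar_carrier[of K K' Q n m l r \<theta> \<delta> E F] li lj n1 n2 T D
    by (simp add: Sbar_entry[OF T D li lj E F] field_simps power2_eq_square)
qed (use Omega_M_carrier[of Q n m l r \<theta> \<delta> E F] Bmat_carrier[of K n l \<theta>] in auto)

lemma part1:
  assumes K: "2 \<le> K" and K': "1 \<le> K'" and mo: "model_ok K K' Q n m l r \<theta> \<delta> E F"
  shows "(\<forall>i. 1 \<le> i \<and> i \<le> K \<longrightarrow>
         eig i (Omega_M Q n m l r \<theta> \<delta> E F)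
           = (vnorm n \<theta>)\<^sup>2 * (vnorm m \<delta>)\<^sup>2 * eig i (Sbar K K' Q n m l r \<theta> \<delta> E F)) \<and>
      (\<forall>i. K < i \<and> i \<le> n \<longrightarrow> eig i (Omega_M Q n m l r \<theta> \<delta> E F) = 0) \<and>
      (\<forall>J \<Sigma>. eig_decomp K (Sbar K K' Q n m l r \<theta> \<delta> E F) J \<Sigma> \<longrightarrow>
         Umat K n l \<theta> J \<in> carrier_mat n K \<and>
         transpose_mat (Umat K n l \<theta> J) * Umat K n l \<theta> J = 1\<^sub>m K \<and>
         Omega_M Q n m l r \<theta> \<delta> E F =
           Umat K n l \<theta> J * (((vnorm n \<theta>)\<^sup>2 * (vnorm m \<delta>)\<^sup>2) \<cdot>\<^sub>m \<Sigma>)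
             * transpose_mat (Umat K n l \<theta> J))"
proof -
  have K1: "1 \<le> K" using K by simp
  note f = model_facts[OF mo K1 K']
  let ?c = "(vnorm n \<theta>)\<^sup>2 * (vnorm m \<delta>)\<^sup>2"
  let ?S = "Sbar K K' Q n m l r \<theta> \<delta> E F"
  let ?B = "Bmat K n l \<theta>"
  have c: "?c > 0" using f(4,5) by simp
  have Bc: "?B \<in> carrier_mat n K" by (rule Bmat_carrier)
  have BtB: "transpose_mat ?B * ?B = 1\<^sub>m K" using Bmat_BtB f(1,6) by blast
  have Om: "Omega_M Q n m l r \<theta> \<delta> E F = ?B * (?c \<cdot>\<^sub>m ?S) * transpose_mat ?B"
    by (rule Omega_factor[OF f(1,2,4,5,6,7,8)])
  have ev: "(\<forall>i. 1 \<le> i \<and> i \<le> K \<longrightarrow> eig i (Omega_M Q n m l r \<theta> \<delta> E F) = ?c * eig i ?S) \<and>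
      (\<forall>i. K < i \<and> i \<le> n \<longrightarrow> eig i (Omega_M Q n m l r \<theta> \<delta> E F) = 0)"
    by (rule eig_abstract[OF Bc BtB Sbar_carrier Sbar_sym[OF f(4,5,7,8)] Sbar_psd[OF f(4,5,7,8)] c f(9) Om])
  have dec: "Umat K n l \<theta> J \<in> carrier_mat n K \<and>
         transpose_mat (Umat K n l \<theta> J) * Umat K n l \<theta> J = 1\<^sub>m K \<and>
         Omega_M Q n m l r \<theta> \<delta> E F = Umat K n l \<theta> J * (?c \<cdot>\<^sub>m \<Sigma>) * transpose_mat (Umat K n l \<theta> J)"
    if ed: "eig_decomp K ?S J \<Sigma>" for J \<Sigma>
  proof -
    from ed have J: "J \<in> carrier_mat K K" and JtJ: "transpose_mat J * J = 1\<^sub>m K"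
      and Sg: "\<Sigma> \<in> carrier_mat K K" and SJ: "?S = J * \<Sigma> * transpose_mat J"
      unfolding eig_decomp_def by auto
    have U: "Umat K n l \<theta> J = ?B * J" by (rule Umat_eq[OF J f(1)])
    have Uc: "?B * J \<in> carrier_mat n K" using Bc J by simp
    have Jt: "transpose_mat J \<in> carrier_mat K K" using J by simp
    have Bt: "transpose_mat ?B \<in> carrier_mat K n" using Bc by simp
    have cS: "?c \<cdot>\<^sub>m \<Sigma> \<in> carrier_mat K K" using Sg by simp
    have "transpose_mat (?B * J) * (?B * J) = (transpose_mat J * transpose_mat ?B) * (?B * J)"
      using Bc J by (simp add: transpose_mult)
    also have "\<dots> = transpose_mat J * (transpose_mat ?B * (?B * J))"
      by (rule assoc_mult_mat[OF Jt Bt Uc])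
    also have "transpose_mat ?B * (?B * J) = (transpose_mat ?B * ?B) * J"
      by (rule assoc_mult_mat[OF Bt Bc J, symmetric])
    also have "transpose_mat J * ((transpose_mat ?B * ?B) * J) = 1\<^sub>m K" using BtB JtJ J Jt by simp
    finally have UtU: "transpose_mat (?B * J) * (?B * J) = 1\<^sub>m K" .
    have "?c \<cdot>\<^sub>m ?S = J * (?c \<cdot>\<^sub>m \<Sigma>) * transpose_mat J"
      unfolding SJ using J Sg Jt
      by (simp add: mult_smult_distrib[of J K K \<Sigma> K] mult_smult_assoc_mat[of _ K K _ K])
    hence "Omega_M Q n m l r \<theta> \<delta> E F = ?B * (J * (?c \<cdot>\<^sub>m \<Sigma>) * transpose_mat J) * transpose_mat ?B"
      using Om by simp
    also have "\<dots> = (?B * J) * (?c \<cdot>\<^sub>m \<Sigma>) * transpose_mat (?B * J)"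
    proof -
      have "(?B * J) * (?c \<cdot>\<^sub>m \<Sigma>) * transpose_mat (?B * J) = (?B * J) * (?c \<cdot>\<^sub>m \<Sigma>) * (transpose_mat J * transpose_mat ?B)"
        using Bc J by (simp add: transpose_mult)
      also have "\<dots> = ?B * (J * (?c \<cdot>\<^sub>m \<Sigma>) * transpose_mat J) * transpose_mat ?B"
      proof -
        have JB: "transpose_mat J * transpose_mat ?B \<in> carrier_mat K n" using Jt Bt by simp
        have sJB: "(?c \<cdot>\<^sub>m \<Sigma>) * (transpose_mat J * transpose_mat ?B) \<in> carrier_mat K n" using cS JB by simp
        have JS: "J * (?c \<cdot>\<^sub>m \<Sigma>) \<in> carrier_mat K K" using J cS by simp
        have JSJ: "J * (?c \<cdot>\<^sub>m \<Sigma>) * transpose_mat J \<in> carrier_mat K K" using JS Jt by simp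
        have "(?B * J) * (?c \<cdot>\<^sub>m \<Sigma>) * (transpose_mat J * transpose_mat ?B)
            = (?B * J) * ((?c \<cdot>\<^sub>m \<Sigma>) * (transpose_mat J * transpose_mat ?B))"
          by (rule assoc_mult_mat[OF Uc cS JB])
        also have "\<dots> = ?B * (J * ((?c \<cdot>\<^sub>m \<Sigma>) * (transpose_mat J * transpose_mat ?B)))"
          by (rule assoc_mult_mat[OF Bc J sJB])
        also have "J * ((?c \<cdot>\<^sub>m \<Sigma>) * (transpose_mat J * transpose_mat ?B)) = (J * (?c \<cdot>\<^sub>m \<Sigma>)) * (transpose_mat J * transpose_mat ?B)"
          by (rule assoc_mult_mat[OF J cS JB, symmetric])
        also have "\<dots> = (J * (?c \<cdot>\<^sub>m \<Sigma>) * transpose_mat J) * transpose_mat ?B"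
          by (rule assoc_mult_mat[OF JS Jt Bt, symmetric])
        also have "?B * ((J * (?c \<cdot>\<^sub>m \<Sigma>) * transpose_mat J) * transpose_mat ?B) = ?B * (J * (?c \<cdot>\<^sub>m \<Sigma>) * transpose_mat J) * transpose_mat ?B"
          by (rule assoc_mult_mat[OF Bc JSJ Bt, symmetric])
        finally show ?thesis .
      qed
      finally show ?thesis by simp
    qed
    finally show ?thesis unfolding U using Uc UtU by simp
  qed
  show ?thesis using ev dec by blast
qed

lemma asym_point:
  assumes mo: "model_ok K K' Q n m l r \<theta> \<delta> E F" and K: "1 \<le> K" and K': "1 \<le> K'"
    and ed: "eig_decomp K (Sbar K K' Q n m l r \<theta> \<delta> E F) J \<Sigma>" and C: "C > 0"
    and rat: "\<forall>k<K. \<forall>k'<K. vnorm n (restr l \<theta> k) \<le> C * vnorm n (restr l \<theta> k')"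
    and i: "i < n"
  shows "vnorm K (\<lambda>a. Umat K n l \<theta> J $$ (i,a)) \<le> (sqrt K * C + 1) * (\<theta> i / vnorm n \<theta>) \<and>
         \<theta> i / vnorm n \<theta> \<le> (sqrt K * C + 1) * vnorm K (\<lambda>a. Umat K n l \<theta> J $$ (i,a))"
proof -
  note f = model_facts[OF mo K K']
  define T where "T = vnorm n \<theta>"
  define nu where "nu k = vnorm n (restr l \<theta> k)" for k
  define w where "w = \<theta> i / nu (l i)"
  have li: "l i < K" using f(1) i by auto
  have nup: "nu (l i) > 0" unfolding nu_def using f(6) li by auto
  have thp: "\<theta> i > 0" using f(3) i by auto
  have Tp: "T > 0" unfolding T_def using f(4) .
  have wp: "w > 0" unfolding w_def using nup thp by simp
  from ed have J: "J \<in> carrier_mat K K" and JJt: "J * transpose_mat J = 1\<^sub>m K"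
    unfolding eig_decomp_def by auto
  have rowJ: "(\<Sum>a<K. (J $$ (l i, a))\<^sup>2) = 1"
    using mult_tr_entry[OF J li li] JJt li by (simp add: power2_eq_square)
  have "(\<Sum>a<K. (Umat K n l \<theta> J $$ (i,a))\<^sup>2) = (\<Sum>a<K. w\<^sup>2 * (J $$ (l i, a))\<^sup>2)"
    by (rule sum.cong) (use i in \<open>auto simp: Umat_def w_def nu_def power_mult_distrib power_divide\<close>)
  also have "\<dots> = w\<^sup>2" using rowJ by (simp add: sum_distrib_left[symmetric])
  finally have U: "vnorm K (\<lambda>a. Umat K n l \<theta> J $$ (i,a)) = w"
    unfolding vnorm_def using wp by simp
  have T2: "T\<^sup>2 = (\<Sum>k<K. (nu k)\<^sup>2)"
    unfolding T_def nu_def using vnorm_sq[of n \<theta>] group_sum[OF f(1), of \<theta> "\<lambda>_. 1"] by simp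
  have "(\<Sum>k<K. (nu k)\<^sup>2) \<le> (\<Sum>k<K. (C * nu (l i))\<^sup>2)"
  proof (rule sum_mono)
    fix k assume "k \<in> {..<K}"
    hence "nu k \<le> C * nu (l i)" using rat li unfolding nu_def by auto
    moreover have "nu k \<ge> 0" unfolding nu_def by (rule vnorm_nonneg)
    ultimately show "(nu k)\<^sup>2 \<le> (C * nu (l i))\<^sup>2" by (rule power_mono)
  qed
  also have "\<dots> = (sqrt K * C * nu (l i))\<^sup>2" by (simp add: power_mult_distrib)
  finally have "T\<^sup>2 \<le> (sqrt K * C * nu (l i))\<^sup>2" using T2 by simp
  hence TC: "T \<le> sqrt K * C * nu (l i)"
    using Tp C nup by (meson power2_le_imp_le mult_nonneg_nonneg real_sqrt_ge_zero less_imp_le of_nat_0_le_iff)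
  have "(nu (l i))\<^sup>2 \<le> (\<Sum>k<K. (nu k)\<^sup>2)" by (rule member_le_sum) (use li in auto)
  hence "(nu (l i))\<^sup>2 \<le> T\<^sup>2" using T2 by simp
  hence nuT: "nu (l i) \<le> T" using Tp by (meson power2_le_imp_le less_imp_le)
  have A: "w \<le> (sqrt K * C + 1) * (\<theta> i / T)"
  proof -
    have "T \<le> (sqrt K * C + 1) * nu (l i)" using TC nup by (simp add: distrib_right)
    hence "\<theta> i * T \<le> \<theta> i * ((sqrt K * C + 1) * nu (l i))" using thp by simp
    thus ?thesis unfolding w_def using nup Tp by (simp add: field_simps)
  qed
  have B: "\<theta> i / T \<le> (sqrt K * C + 1) * w"
  proof -
    have "\<theta> i / T \<le> w" unfolding w_def using nuT nup thp by (simp add: frac_le)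
    also have "w \<le> (sqrt K * C + 1) * w" using wp C by simp
    finally show ?thesis .
  qed
  show ?thesis unfolding U using A B unfolding T_def by blast
qed

lemma part2:
  fixes K K' Q :: nat
    and mf :: "nat \<Rightarrow> nat" and lf :: "nat \<Rightarrow> nat \<Rightarrow> nat" and rf :: "nat \<Rightarrow> nat \<Rightarrow> nat"
    and \<theta>f :: "nat \<Rightarrow> nat \<Rightarrow> real" and \<delta>f :: "nat \<Rightarrow> nat \<Rightarrow> real"
    and Ef :: "nat \<Rightarrow> real mat" and Ff :: "nat \<Rightarrow> nat \<Rightarrow> real mat"
    and Jf :: "nat \<Rightarrow> real mat" and \<Sigma>f :: "nat \<Rightarrow> real mat"
  assumes K: "1 \<le> K" and K': "1 \<le> K'"
    and ev: "\<forall>\<^sub>F n in sequentially.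
         model_ok K K' Q n (mf n) (lf n) (rf n) (\<theta>f n) (\<delta>f n) (Ef n) (Ff n) \<and>
         eig_decomp K (Sbar K K' Q n (mf n) (lf n) (rf n) (\<theta>f n) (\<delta>f n) (Ef n) (Ff n))
           (Jf n) (\<Sigma>f n)"
    and ex: "\<exists>C>0. \<forall>\<^sub>F n in sequentially. \<forall>k<K. \<forall>k'<K.
          vnorm n (restr (lf n) (\<theta>f n) k) \<le> C * vnorm n (restr (lf n) (\<theta>f n) k')"
  shows "\<exists>C>0. \<forall>\<^sub>F n in sequentially. \<forall>i<n.
          vnorm K (\<lambda>a. Umat K n (lf n) (\<theta>f n) (Jf n) $$ (i,a)) \<le> C * (\<theta>f n i / vnorm n (\<theta>f n)) \<and>
          \<theta>f n i / vnorm n (\<theta>f n) \<le> C * vnorm K (\<lambda>a. Umat K n (lf n) (\<theta>f n) (Jf n) $$ (i,a))"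
proof -
  from ex obtain C where C: "C > 0" and evC: "\<forall>\<^sub>F n in sequentially. \<forall>k<K. \<forall>k'<K.
          vnorm n (restr (lf n) (\<theta>f n) k) \<le> C * vnorm n (restr (lf n) (\<theta>f n) k')" by blast
  have pos: "sqrt K * C + 1 > 0" by (intro add_nonneg_pos mult_nonneg_nonneg) (use C in auto)
  show ?thesis
  proof (rule exI[of _ "sqrt K * C + 1"], rule conjI[OF pos])
    show "\<forall>\<^sub>F n in sequentially. \<forall>i<n.
          vnorm K (\<lambda>a. Umat K n (lf n) (\<theta>f n) (Jf n) $$ (i,a)) \<le> (sqrt K * C + 1) * (\<theta>f n i / vnorm n (\<theta>f n)) \<and>
          \<theta>f n i / vnorm n (\<theta>f n) \<le> (sqrt K * C + 1) * vnorm K (\<lambda>a. Umat K n (lf n) (\<theta>f n) (Jf n) $$ (i,a))"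
      using eventually_conj[OF ev evC]
      by (rule eventually_mono) (use asym_point[OF _ K K' _ C] in blast)
  qed
qed

theorem proposition1:
  fixes K K' Q :: nat
  assumes "2 \<le> K" and "1 \<le> K'" and "1 \<le> Q"
  shows
   "(\<forall>n m l r \<theta> \<delta> E F. model_ok K K' Q n m l r \<theta> \<delta> E F \<longrightarrow>
      (\<forall>i. 1 \<le> i \<and> i \<le> K \<longrightarrow>
         eig i (Omega_M Q n m l r \<theta> \<delta> E F)
           = (vnorm n \<theta>)\<^sup>2 * (vnorm m \<delta>)\<^sup>2 * eig i (Sbar K K' Q n m l r \<theta> \<delta> E F)) \<and>
      (\<forall>i. K < i \<and> i \<le> n \<longrightarrow> eig i (Omega_M Q n m l r \<theta> \<delta> E F) = 0) \<and>
      (\<forall>J \<Sigma>. eig_decomp K (Sbar K K' Q n m l r \<theta> \<delta> E F) J \<Sigma> \<longrightarrow>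
         Umat K n l \<theta> J \<in> carrier_mat n K \<and>
         transpose_mat (Umat K n l \<theta> J) * Umat K n l \<theta> J = 1\<^sub>m K \<and>
         Omega_M Q n m l r \<theta> \<delta> E F =
           Umat K n l \<theta> J * (((vnorm n \<theta>)\<^sup>2 * (vnorm m \<delta>)\<^sup>2) \<cdot>\<^sub>m \<Sigma>)
             * transpose_mat (Umat K n l \<theta> J)))
    \<and>
    (\<forall>(mf :: nat \<Rightarrow> nat) (lf :: nat \<Rightarrow> nat \<Rightarrow> nat) (rf :: nat \<Rightarrow> nat \<Rightarrow> nat)
       (\<theta>f :: nat \<Rightarrow> nat \<Rightarrow> real) (\<delta>f :: nat \<Rightarrow> nat \<Rightarrow> real)
       (Ef :: nat \<Rightarrow> real mat) (Ff :: nat \<Rightarrow> nat \<Rightarrow> real mat)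
       (Jf :: nat \<Rightarrow> real mat) (\<Sigma>f :: nat \<Rightarrow> real mat).
      (\<forall>\<^sub>F n in sequentially.
         model_ok K K' Q n (mf n) (lf n) (rf n) (\<theta>f n) (\<delta>f n) (Ef n) (Ff n) \<and>
         eig_decomp K (Sbar K K' Q n (mf n) (lf n) (rf n) (\<theta>f n) (\<delta>f n) (Ef n) (Ff n))
           (Jf n) (\<Sigma>f n)) \<longrightarrow>
      (\<exists>C>0. \<forall>\<^sub>F n in sequentially. \<forall>k<K. \<forall>k'<K.
          vnorm n (restr (lf n) (\<theta>f n) k) \<le> C * vnorm n (restr (lf n) (\<theta>f n) k')) \<longrightarrow>
      (\<exists>C>0. \<forall>\<^sub>F n in sequentially. \<forall>i<n.
          vnorm K (\<lambda>a. Umat K n (lf n) (\<theta>f n) (Jf n) $$ (i,a)) \<le> C * (\<theta>f n i / vnorm n (\<theta>f n)) \<and>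
          \<theta>f n i / vnorm n (\<theta>f n) \<le> C * vnorm K (\<lambda>a. Umat K n (lf n) (\<theta>f n) (Jf n) $$ (i,a))))"
proof -
  have K1: "1 \<le> K" using assms(1) by simp
  show ?thesis
    apply (rule conjI)
     apply (intro allI impI)
     apply (rule part1[OF assms(1,2)])
     apply assumption
    apply (intro allI impI)
    apply (rule part2[OF K1 assms(2)])
     apply assumption+
    done
qed

end
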